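(* For each $\nu\in\{1,\dots,5\}$ and each $Y$ in the domain of $Z^\nu_1$ (i.e. where $1-y_2z_1$, $z_1+z_3$, $y_2z_3+1$ are all nonzero), the $8\times 20$ Jacobian matrix $\dfrac{\partial Z^\nu_1}{\partial Y}(Y)$ has rank at most $5$.
   Context: Let $Y=(z_1,y_2,z_3,z_4,y_5,p_3,p_4,p_5,q_4,q_5,\kappa_1,\dots,\kappa_5)\in\mathbb R^{20}$, where $z_1,y_2,z_3,z_4,y_5,\kappa_1,\dots,\kappa_5\in\mathbb R$ and $p_3,p_4,p_5,q_4,q_5\in\mathbb R^2$. Set $\delta^0=(1,1)$, $\alpha_1=(-1,z_1)$, $\alpha_2=(y_2,-1)$, $\alpha_3=(1,z_3)$, $\alpha_4=(1,z_4)$, $\alpha_5=(y_5,1)$, and define $p_1=\frac{y_2z_3+1}{1-y_2z_1}p_3+\frac{y_2z_4+1}{1-y_2z_1}p_4+\frac{y_2+y_5}{1-y_2z_1}p_5$, $p_2=\frac{z_1+z_3}{1-y_2z_1}p_3+\frac{z_1+z_4}{1-y_2z_1}p_4+\frac{y_5z_1+1}{1-y_2z_1}p_5$, $q_1=\frac{(y_2z_4+1)(z_3-z_4)}{(z_1+z_3)(y_2z_1-1)}q_4+\frac{(y_2+y_5)(y_5z_3-1)}{(z_1+z_3)(y_2z_1-1)}q_5$, $q_2=-\frac{(z_1+z_4)(z_3-z_4)}{(y_2z_1-1)(y_2z_3+1)}q_4-\frac{(y_5z_1+1)(y_5z_3-1)}{(y_2z_1-1)(y_2z_3+1)}q_5$,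 $q_3=-\frac{(z_1+z_4)(y_2z_4+1)}{(z_1+z_3)(y_2z_3+1)}q_4-\frac{(y_2+y_5)(y_5z_1+1)}{(z_1+z_3)(y_2z_3+1)}q_5$. For $j=1,\dots,5$ let $C_j(Y)=\begin{pmatrix}p_j\\ (\alpha_j\cdot\delta^0)q_j\end{pmatrix}\otimes\alpha_j\in\mathbb M^{4\times 2}$, and $Z^\nu_1(Y)=\kappa_\nu C_\nu(Y)$. The space $\mathbb M^{4\times 2}$ is identified with $\mathbb R^8$ by stacking columns: $(x_{ik})\mapsto(x_{11},x_{21},x_{31},x_{41},x_{12},x_{22},x_{32},x_{42})$. *)

theory Defs
  imports "HOL-Analysis.Analysis" "HOL-Library.Numeral_Type"
begin

definition z1 :: "real^20 \<Rightarrow> real" where "z1 Y = Y $ 0"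
definition y2 :: "real^20 \<Rightarrow> real" where "y2 Y = Y $ 1"
definition z3 :: "real^20 \<Rightarrow> real" where "z3 Y = Y $ 2"
definition z4 :: "real^20 \<Rightarrow> real" where "z4 Y = Y $ 3"
definition y5 :: "real^20 \<Rightarrow> real" where "y5 Y = Y $ 4"
definition p3 :: "real^20 \<Rightarrow> real \<times> real" where "p3 Y = (Y $ 5, Y $ 6)"
definition p4 :: "real^20 \<Rightarrow> real \<times> real" where "p4 Y = (Y $ 7, Y $ 8)"
definition p5 :: "real^20 \<Rightarrow> real \<times> real" where "p5 Y = (Y $ 9, Y $ 10)"
definition q4 :: "real^20 \<Rightarrow> real \<times> real" where "q4 Y = (Y $ 11, Y $ 12)"
definition q5 :: "real^20 \<Rightarrow> real \<times> real" where "q5 Y = (Y $ 13, Y $ 14)"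

definition kappa :: "nat \<Rightarrow> real^20 \<Rightarrow> real" where
  "kappa j Y = (if j = 1 then Y $ 15 else if j = 2 then Y $ 16 else if j = 3 then Y $ 17
                else if j = 4 then Y $ 18 else Y $ 19)"

definition alpha :: "nat \<Rightarrow> real^20 \<Rightarrow> real \<times> real" where
  "alpha j Y = (if j = 1 then (-1, z1 Y) else if j = 2 then (y2 Y, -1)
                else if j = 3 then (1, z3 Y) else if j = 4 then (1, z4 Y) else (y5 Y, 1))"

definition delta0 :: "real \<times> real" where "delta0 = (1, 1)"

definition pp :: "nat \<Rightarrow> real^20 \<Rightarrow> real \<times> real" where
  "pp j Y = (let a = z1 Y; b = y2 Y; c = z3 Y; d = z4 Y; e = y5 Y in
    if j = 1 then ((b*c+1)/(1-b*a)) *\<^sub>R p3 Y + ((b*d+1)/(1-b*a)) *\<^sub>R p4 Y + ((b+e)/(1-b*a)) *\<^sub>R p5 Y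
    else if j = 2 then ((a+c)/(1-b*a)) *\<^sub>R p3 Y + ((a+d)/(1-b*a)) *\<^sub>R p4 Y + ((e*a+1)/(1-b*a)) *\<^sub>R p5 Y
    else if j = 3 then p3 Y else if j = 4 then p4 Y else p5 Y)"

definition qq :: "nat \<Rightarrow> real^20 \<Rightarrow> real \<times> real" where
  "qq j Y = (let a = z1 Y; b = y2 Y; c = z3 Y; d = z4 Y; e = y5 Y in
    if j = 1 then ((b*d+1)*(c-d)/((a+c)*(b*a-1))) *\<^sub>R q4 Y + ((b+e)*(e*c-1)/((a+c)*(b*a-1))) *\<^sub>R q5 Y
    else if j = 2 then (-((a+d)*(c-d)/((b*a-1)*(b*c+1)))) *\<^sub>R q4 Y
                     + (-((e*a+1)*(e*c-1)/((b*a-1)*(b*c+1)))) *\<^sub>R q5 Y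
    else if j = 3 then (-((a+d)*(b*d+1)/((a+c)*(b*c+1)))) *\<^sub>R q4 Y
                     + (-((b+e)*(e*a+1)/((a+c)*(b*c+1)))) *\<^sub>R q5 Y
    else if j = 4 then q4 Y else q5 Y)"

definition colv :: "nat \<Rightarrow> real^20 \<Rightarrow> nat \<Rightarrow> real" where
  "colv j Y i = (let s = alpha j Y \<bullet> delta0 in
     if i = 0 then fst (pp j Y) else if i = 1 then snd (pp j Y)
     else if i = 2 then s * fst (qq j Y) else s * snd (qq j Y))"

text \<open>C_j(Y) = colv \<otimes> alpha_j, a 4x2 matrix, stacked by columns into R^8
  (indices 0..7: entries (1,1),(2,1),(3,1),(4,1),(1,2),(2,2),(3,2),(4,2)).\<close>
definition Cmat :: "nat \<Rightarrow> real^20 \<Rightarrow> real^8" where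
  "Cmat j Y = (\<chi> k::8. if k = 0 then colv j Y 0 * fst (alpha j Y)
     else if k = 1 then colv j Y 1 * fst (alpha j Y)
     else if k = 2 then colv j Y 2 * fst (alpha j Y)
     else if k = 3 then colv j Y 3 * fst (alpha j Y)
     else if k = 4 then colv j Y 0 * snd (alpha j Y)
     else if k = 5 then colv j Y 1 * snd (alpha j Y)
     else if k = 6 then colv j Y 2 * snd (alpha j Y)
     else colv j Y 3 * snd (alpha j Y))"

definition Z1 :: "nat \<Rightarrow> real^20 \<Rightarrow> real^8" where
  "Z1 \<nu> Y = kappa \<nu> Y *\<^sub>R Cmat \<nu> Y"

definition in_domain :: "real^20 \<Rightarrow> bool" where
  "in_domain Y \<longleftrightarrow> 1 - y2 Y * z1 Y \<noteq> 0 \<and> z1 Y + z3 Y \<noteq> 0 \<and> y2 Y * z3 Y + 1 \<noteq> 0"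

end

theory Submission
  imports Defs
begin
lemma exhaust_8:
  fixes x :: 8
  shows "x = 0 \<or> x = 1 \<or> x = 2 \<or> x = 3 \<or> x = 4 \<or> x = 5 \<or> x = 6 \<or> x = 7"
proof (induct x)
  case (of_int z)
  then have "z = 0 \<or> z = 1 \<or> z = 2 \<or> z = 3 \<or> z = 4 \<or> z = 5 \<or> z = 6 \<or> z = 7" by fastforce
  then show ?case by auto
qed
lemma coord_diff[simp]: "(\<lambda>x::real^20. x $ i) differentiable F"
  by (rule bounded_linear_imp_differentiable) (rule bounded_linear_vec_nth)

lemma colv_diff:
  assumes "\<nu> \<in> {1..5}" "in_domain Y"
  shows "(\<lambda>Y'. colv \<nu> Y' i) differentiable (at Y)"
proof -
  have d: "1 - Y$1*Y$0 \<noteq> 0" "Y$0 + Y$2 \<noteq> 0" "Y$1*Y$2+1 \<noteq> 0" "Y$1*Y$0 - 1 \<noteq> 0"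
    using assms(2) by (auto simp: in_domain_def z1_def y2_def z3_def)
  from assms(1) have "\<nu> = 1 \<or> \<nu> = 2 \<or> \<nu> = 3 \<or> \<nu> = 4 \<or> \<nu> = 5" by auto
  moreover have "i = 0 \<or> i = 1 \<or> i = 2 \<or> (i \<noteq> 0 \<and> i \<noteq> 1 \<and> i \<noteq> 2)" by auto
  ultimately show ?thesis
    by (elim disjE; (elim conjE)?; insert d; simp add: colv_def pp_def qq_def alpha_def Let_def delta0_def
      p3_def p4_def p5_def q4_def q5_def z1_def y2_def z3_def z4_def y5_def)
qed

lemma coord_der[simp]: "((\<lambda>x::real^20. x $ i) has_derivative (\<lambda>h. h $ i)) F"
  by (rule bounded_linear_imp_has_derivative) (rule bounded_linear_vec_nth)

lemma be: "(\<Sum>k\<in>UNIV. (x $ k) *\<^sub>R axis k 1) = (x::real^'n)"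
  using basis_expansion[of x] unfolding scalar_mult_eq_scaleR .

lemma vec_has_derivative:
  fixes f :: "'a::real_normed_vector \<Rightarrow> real^'n"
  assumes "\<And>k. ((\<lambda>x. f x $ k) has_derivative (\<lambda>h. f' h $ k)) F"
  shows "(f has_derivative f') F"
proof -
  have H: "((\<lambda>x. \<Sum>k\<in>UNIV. (f x $ k) *\<^sub>R (axis k 1::real^'n)) has_derivative (\<lambda>x. \<Sum>k\<in>UNIV. (f' x $ k) *\<^sub>R (axis k 1::real^'n))) F"
    by (rule has_derivative_sum, rule has_derivative_scaleR_left, rule assms)
  have eqf: "(\<lambda>x. \<Sum>k\<in>UNIV. (f x $ k) *\<^sub>R axis k 1) = f" by (rule ext, rule be)
  have eqf': "(\<lambda>x. \<Sum>k\<in>UNIV. (f' x $ k) *\<^sub>R axis k 1) = f'" by (rule ext, rule be)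
  show ?thesis using H unfolding eqf eqf' .
qed

definition ci :: "8 \<Rightarrow> nat" where
  "ci k = (if k = 0 \<or> k = 4 then 0 else if k = 1 \<or> k = 5 then 1 else if k = 2 \<or> k = 6 then 2 else 3)"
definition ri :: "8 \<Rightarrow> bool" where
  "ri k = (k = 0 \<or> k = 1 \<or> k = 2 \<or> k = 3)"

lemma ci_lt: "ci k < 4" by (simp add: ci_def)

lemma Z1_comp: "Z1 \<nu> Y $ k = (kappa \<nu> Y * colv \<nu> Y (ci k)) *
   (if ri k then fst (alpha \<nu> Y) else snd (alpha \<nu> Y))"
  using exhaust_8[of k]
  by (elim disjE) (simp_all add: Z1_def Cmat_def ci_def ri_def)

lemma alpha_der:
  assumes "\<nu> \<in> {1..5}"
  shows "\<exists>A1 A2. ((\<lambda>Y'. fst (alpha \<nu> Y')) has_derivative A1) (at Y)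
     \<and> ((\<lambda>Y'. snd (alpha \<nu> Y')) has_derivative A2) (at Y) \<and> (A1 = (\<lambda>h. 0) \<or> A2 = (\<lambda>h. 0))"
proof -
  from assms have "\<nu> = 1 \<or> \<nu> = 2 \<or> \<nu> = 3 \<or> \<nu> = 4 \<or> \<nu> = 5" by auto
  then show ?thesis
  proof (elim disjE)
    assume "\<nu> = 1" then show ?thesis
      by (intro exI[of _ "\<lambda>h. 0"] exI[of _ "\<lambda>h. h $ 0"]) (simp add: alpha_def z1_def)
  next
    assume "\<nu> = 2" then show ?thesis
      by (intro exI[of _ "\<lambda>h. h $ 1"] exI[of _ "\<lambda>h. 0"]) (simp add: alpha_def y2_def)
  next
    assume "\<nu> = 3" then show ?thesis
      by (intro exI[of _ "\<lambda>h. 0"] exI[of _ "\<lambda>h. h $ 2"]) (simp add: alpha_def z3_def)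
  next
    assume "\<nu> = 4" then show ?thesis
      by (intro exI[of _ "\<lambda>h. 0"] exI[of _ "\<lambda>h. h $ 3"]) (simp add: alpha_def z4_def)
  next
    assume "\<nu> = 5" then show ?thesis
      by (intro exI[of _ "\<lambda>h. h $ 4"] exI[of _ "\<lambda>h. 0"]) (simp add: alpha_def y5_def)
  qed
qed

lemma kappa_diff:
  assumes "\<nu> \<in> {1..5}"
  shows "(\<lambda>Y'. kappa \<nu> Y') differentiable (at Y)"
proof -
  from assms have "\<nu> = 1 \<or> \<nu> = 2 \<or> \<nu> = 3 \<or> \<nu> = 4 \<or> \<nu> = 5" by auto
  then show ?thesis by (elim disjE) (simp_all add: kappa_def)
qed

theorem lemma3p2:
  fixes \<nu> :: nat and Y :: "real^20"
  assumes "\<nu> \<in> {1..5}" and "in_domain Y"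
  shows "Z1 \<nu> differentiable (at Y)
    \<and> rank (matrix (frechet_derivative (Z1 \<nu>) (at Y))) \<le> 5"
proof -
  define g where "g i Y' = kappa \<nu> Y' * colv \<nu> Y' i" for i Y'
  define a1 where "a1 Y' = fst (alpha \<nu> Y')" for Y'
  define a2 where "a2 Y' = snd (alpha \<nu> Y')" for Y'
  have "\<forall>i. \<exists>G. (g i has_derivative G) (at Y)"
  proof
    fix i
    have "g i differentiable (at Y)"
      unfolding g_def[abs_def]
      using kappa_diff[OF assms(1)] colv_diff[OF assms] by (rule differentiable_mult)
    then show "\<exists>G. (g i has_derivative G) (at Y)" by (simp add: differentiable_def)
  qed
  then obtain G where G: "\<And>i. (g i has_derivative G i) (at Y)" by metis
  obtain A1 A2 where A1: "(a1 has_derivative A1) (at Y)" and A2: "(a2 has_derivative A2) (at Y)"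
    and A0: "A1 = (\<lambda>h. 0) \<or> A2 = (\<lambda>h. 0)"
    using alpha_der[OF assms(1), of Y] unfolding a1_def[abs_def] a2_def[abs_def] by blast
  define D where "D h = (\<chi> k. G (ci k) h * (if ri k then a1 Y else a2 Y)
     + g (ci k) Y * (if ri k then A1 h else A2 h))" for h
  have Zc: "(\<lambda>Y'. Z1 \<nu> Y' $ k) = (\<lambda>Y'. g (ci k) Y' * (if ri k then a1 Y' else a2 Y'))" for k
    by (simp add: Z1_comp g_def a1_def a2_def cong: if_cong)
  have DZ: "(Z1 \<nu> has_derivative D) (at Y)"
  proof (rule vec_has_derivative)
    fix k
    show "((\<lambda>Y'. Z1 \<nu> Y' $ k) has_derivative (\<lambda>h. D h $ k)) (at Y)"
    proof (cases "ri k")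
      case True
      have "((\<lambda>Y'. g (ci k) Y' * a1 Y') has_derivative
            (\<lambda>h. g (ci k) Y * A1 h + G (ci k) h * a1 Y)) (at Y)"
        by (rule has_derivative_mult[OF G A1])
      then show ?thesis unfolding Zc D_def using True by (simp add: algebra_simps)
    next
      case False
      have "((\<lambda>Y'. g (ci k) Y' * a2 Y') has_derivative
            (\<lambda>h. g (ci k) Y * A2 h + G (ci k) h * a2 Y)) (at Y)"
        by (rule has_derivative_mult[OF G A2])
      then show ?thesis unfolding Zc D_def using False by (simp add: algebra_simps)
    qed
  qed
  have diff: "Z1 \<nu> differentiable (at Y)" using DZ by (auto simp: differentiable_def)
  have fd: "frechet_derivative (Z1 \<nu>) (at Y) = D" using frechet_derivative_at[OF DZ] by simp
  have lin: "linear D" using DZ has_derivative_linear by blast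
  have rk: "rank (matrix D) = dim (range D)"
    using rank_dim_range[of "matrix D"] matrix_vector_mul(2)[OF lin] by simp
  define u where "u i = (\<chi> k. if ci k = i then (if ri k then a1 Y else a2 Y) else 0)" for i
  define w1 where "w1 = (\<chi> k. if ri k then g (ci k) Y else 0)"
  define w2 where "w2 = (\<chi> k. if ri k then 0 else g (ci k) Y)"
  have sumk: "(\<Sum>i<4. G i h * (u i $ k)) = G (ci k) h * (if ri k then a1 Y else a2 Y)" for h k
  proof -
    have "(\<Sum>i<4. G i h * (u i $ k)) = (\<Sum>i<4. if ci k = i then G i h * (if ri k then a1 Y else a2 Y) else 0)"
      by (intro sum.cong) (auto simp: u_def)
    also have "\<dots> = G (ci k) h * (if ri k then a1 Y else a2 Y)"
      using ci_lt[of k] by (simp add: sum.delta)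
    finally show ?thesis .
  qed
  obtain w where Dw: "\<And>h. D h = (\<Sum>i<4. G i h *\<^sub>R u i) + (if A1 = (\<lambda>h. 0) then A2 h else A1 h) *\<^sub>R w"
  proof (cases "A1 = (\<lambda>h. 0)")
    case True
    have "D h = (\<Sum>i<4. G i h *\<^sub>R u i) + A2 h *\<^sub>R w2" for h
      unfolding vec_eq_iff
    proof
      fix k
      show "D h $ k = ((\<Sum>i<4. G i h *\<^sub>R u i) + A2 h *\<^sub>R w2) $ k"
        using sumk[of h k] True by (simp add: D_def w2_def)
    qed
    then show ?thesis using that[of w2] True by simp
  next
    case False
    then have A2z: "A2 = (\<lambda>h. 0)" using A0 by simp
    have "D h = (\<Sum>i<4. G i h *\<^sub>R u i) + A1 h *\<^sub>R w1" for h
      unfolding vec_eq_iff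
    proof
      fix k
      show "D h $ k = ((\<Sum>i<4. G i h *\<^sub>R u i) + A1 h *\<^sub>R w1) $ k"
        using sumk[of h k] A2z by (simp add: D_def w1_def)
    qed
    then show ?thesis using that[of w1] False by simp
  qed
  let ?S = "u ` {..<4} \<union> {w}"
  have "range D \<subseteq> span ?S"
  proof
    fix x assume "x \<in> range D"
    then obtain h where x: "x = D h" by auto
    have "(\<Sum>i<4. G i h *\<^sub>R u i) \<in> span ?S"
      by (intro span_sum) (simp add: span_base span_mul)
    moreover have "(if A1 = (\<lambda>h. 0) then A2 h else A1 h) *\<^sub>R w \<in> span ?S"
      by (simp add: span_base span_mul)
    ultimately show "x \<in> span ?S" unfolding x Dw by (rule span_add)
  qed
  then have "dim (range D) \<le> card ?S" by (rule dim_le_card) simp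
  also have "card ?S \<le> card (u ` {..<4}) + card {w}" by (rule card_Un_le)
  also have "\<dots> \<le> 5" using card_image_le[of "{..<4::nat}" u] by simp
  finally have "dim (range D) \<le> 5" .
  then show ?thesis using diff unfolding fd rk by (rule conjI[rotated])
qed
end
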